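(* Let $\{e_n\}_{n\in\mathbb{Z}}$ be i.i.d. real random variables whose common distribution has a continuous, bounded, strictly positive density on $\mathbb{R}$. Let $q,d\ge1$ be integers and $r,\mu_1,\mu_2,\phi_1,\dots,\phi_q,\psi_1,\dots,\psi_q\in\mathbb{R}$, and let $\{y_n\}_{n\in\mathbb{Z}}$ be the unique strictly stationary solution of $$y_n=\begin{cases}\mu_1+e_n+\sum_{i=1}^q\phi_ie_{n-i}, & \text{if } y_{n-d}\le r,\\ \mu_2+e_n+\sum_{i=1}^q\psi_ie_{n-i}, & \text{if } y_{n-d}>r.\end{cases}$$ Then there exists $\rho\in(0,1)$ such that for all $u,v\in\mathbb{R}$, $$\big|\mathbb{P}(y_0\le u,\ y_k\le v)-\mathbb{P}(y_0\le u)\,\mathbb{P}(y_k\le v)\big|=O(\rho^k)\quad\text{as } k\to\infty.$$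
   Context: A solution means a process on the same probability space as $\{e_n\}$ satisfying the equation almost surely for every $n$. Under the density assumption, with $a_n=\mu_2+e_n+\sum_{i=1}^q\psi_ie_{n-i}$ and $b_n=\mu_1+e_n+\sum_{i=1}^q\phi_ie_{n-i}$, one has $\mathbb{P}(a_n\le r, b_n\le r)+\mathbb{P}(a_n>r,b_n>r)\neq0$, so a unique strictly stationary ergodic solution exists. *)

theory Defs
  imports "HOL-Probability.Probability" "HOL-Library.Landau_Symbols"
begin

definition strictly_stationary :: "'a measure \<Rightarrow> (int \<Rightarrow> 'a \<Rightarrow> real) \<Rightarrow> bool" where
  "strictly_stationary M y \<longleftrightarrow>
     (\<forall>n. y n \<in> borel_measurable M) \<and>
     (\<forall>J h. finite J \<longrightarrow>
        distr M (PiM J (\<lambda>_. borel)) (\<lambda>\<omega>. restrict (\<lambda>j. y (j + h) \<omega>) J)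
      = distr M (PiM J (\<lambda>_. borel)) (\<lambda>\<omega>. restrict (\<lambda>j. y j \<omega>) J))"

end

theory Submission
  imports Defs
begin



definition aa :: "real \<Rightarrow> nat \<Rightarrow> (nat \<Rightarrow> real) \<Rightarrow> (int \<Rightarrow> real) \<Rightarrow> int \<Rightarrow> real" where
  "aa \<mu> q \<phi> x n = \<mu> + x n + (\<Sum>i=1..q. \<phi> i * x (n - int i))"

fun Zf :: "nat \<Rightarrow> nat \<Rightarrow> real \<Rightarrow> real \<Rightarrow> real \<Rightarrow> (nat\<Rightarrow>real) \<Rightarrow> (nat\<Rightarrow>real) \<Rightarrow> (int\<Rightarrow>real) \<Rightarrow> int \<Rightarrow> nat \<Rightarrow> bool" where
  "Zf q d r \<mu>1 \<mu>2 \<phi> \<psi> x n 0 = True"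
| "Zf q d r \<mu>1 \<mu>2 \<phi> \<psi> x n (Suc m) =
     (if Zf q d r \<mu>1 \<mu>2 \<phi> \<psi> x (n - int d) m then aa \<mu>1 q \<phi> x n \<le> r else aa \<mu>2 q \<psi> x n \<le> r)"

definition Yv where
  "Yv q d r \<mu>1 \<mu>2 \<phi> \<psi> x n m =
     (if Zf q d r \<mu>1 \<mu>2 \<phi> \<psi> x (n - int d) m then aa \<mu>1 q \<phi> x n else aa \<mu>2 q \<psi> x n)"

lemma aa_dep:
  assumes "\<And>j. n - int q \<le> j \<Longrightarrow> j \<le> n \<Longrightarrow> x j = x' j"
  shows "aa \<mu> q \<phi> x n = aa \<mu> q \<phi> x' n"
  unfolding aa_def using assms by (auto intro!: sum.cong)

lemma Zf_dep:
  assumes "\<And>j. n - int (m*d) - int q \<le> j \<Longrightarrow> j \<le> n \<Longrightarrow> x j = x' j"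
  shows "Zf q d r \<mu>1 \<mu>2 \<phi> \<psi> x n m = Zf q d r \<mu>1 \<mu>2 \<phi> \<psi> x' n m"
  using assms
proof (induction m arbitrary: n)
  case 0
  then show ?case by simp
next
  case (Suc m)
  have "Zf q d r \<mu>1 \<mu>2 \<phi> \<psi> x (n - int d) m = Zf q d r \<mu>1 \<mu>2 \<phi> \<psi> x' (n - int d) m"
    by (rule Suc.IH) (use Suc.prems in \<open>auto simp: algebra_simps\<close>)
  moreover have "aa \<mu>1 q \<phi> x n = aa \<mu>1 q \<phi> x' n" "aa \<mu>2 q \<psi> x n = aa \<mu>2 q \<psi> x' n"
    using Suc.prems[of] by (intro aa_dep; smt (verit) of_nat_0_le_iff of_nat_mult)+
  ultimately show ?case by simp
qed

lemma Yv_dep: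
  assumes "\<And>j. n - int d - int (m*d) - int q \<le> j \<Longrightarrow> j \<le> n \<Longrightarrow> x j = x' j"
  shows "Yv q d r \<mu>1 \<mu>2 \<phi> \<psi> x n m = Yv q d r \<mu>1 \<mu>2 \<phi> \<psi> x' n m"
proof -
  have "Zf q d r \<mu>1 \<mu>2 \<phi> \<psi> x (n - int d) m = Zf q d r \<mu>1 \<mu>2 \<phi> \<psi> x' (n - int d) m"
    by (rule Zf_dep) (use assms in auto)
  moreover have "aa \<mu>1 q \<phi> x n = aa \<mu>1 q \<phi> x' n" "aa \<mu>2 q \<psi> x n = aa \<mu>2 q \<psi> x' n"
    using assms by (intro aa_dep; smt (verit) of_nat_0_le_iff of_nat_mult)+
  ultimately show ?thesis unfolding Yv_def by simp
qed

lemma aa_meas: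
  assumes "\<And>j. n - int q \<le> j \<Longrightarrow> j \<le> n \<Longrightarrow> j \<in> J"
  shows "(\<lambda>x. aa \<mu> q \<phi> x n) \<in> borel_measurable (PiM J (\<lambda>_. borel))"
  unfolding aa_def using assms
  by (intro borel_measurable_add borel_measurable_sum borel_measurable_times measurable_const
        measurable_component_singleton) auto

lemma Zf_meas:
  assumes "\<And>j. n - int (m*d) - int q \<le> j \<Longrightarrow> j \<le> n \<Longrightarrow> j \<in> J"
  shows "Measurable.pred (PiM J (\<lambda>_. borel)) (\<lambda>x. Zf q d r \<mu>1 \<mu>2 \<phi> \<psi> x n m)"
  using assms
proof (induction m arbitrary: n)
  case 0
  then show ?case by simp
next
  case (Suc m)
  have 1: "Measurable.pred (PiM J (\<lambda>_. borel)) (\<lambda>x. Zf q d r \<mu>1 \<mu>2 \<phi> \<psi> x (n - int d) m)"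
    by (rule Suc.IH) (use Suc.prems in \<open>auto simp: algebra_simps\<close>)
  have 2: "(\<lambda>x. aa \<mu>1 q \<phi> x n) \<in> borel_measurable (PiM J (\<lambda>_. borel))"
          "(\<lambda>x. aa \<mu>2 q \<psi> x n) \<in> borel_measurable (PiM J (\<lambda>_. borel))"
    using Suc.prems by (intro aa_meas; smt (verit) of_nat_0_le_iff of_nat_mult)+
  show ?case using 1 2 by simp
qed

lemma Yv_meas:
  assumes "\<And>j. n - int d - int (m*d) - int q \<le> j \<Longrightarrow> j \<le> n \<Longrightarrow> j \<in> J"
  shows "(\<lambda>x. Yv q d r \<mu>1 \<mu>2 \<phi> \<psi> x n m) \<in> borel_measurable (PiM J (\<lambda>_. borel))"
proof -
  have 1: "Measurable.pred (PiM J (\<lambda>_. borel)) (\<lambda>x. Zf q d r \<mu>1 \<mu>2 \<phi> \<psi> x (n - int d) m)"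
    by (rule Zf_meas) (use assms in auto)
  have 2: "(\<lambda>x. aa \<mu>1 q \<phi> x n) \<in> borel_measurable (PiM J (\<lambda>_. borel))"
          "(\<lambda>x. aa \<mu>2 q \<psi> x n) \<in> borel_measurable (PiM J (\<lambda>_. borel))"
    using assms by (intro aa_meas; smt (verit) of_nat_0_le_iff of_nat_mult)+
  show ?thesis unfolding Yv_def using 1 2 by simp
qed




lemma (in prob_space) prob_approx:
  assumes "X \<in> events" "X' \<in> events" "E \<in> events"
    "AE \<omega> in M. \<omega> \<in> E \<longrightarrow> (\<omega> \<in> X \<longleftrightarrow> \<omega> \<in> X')"
  shows "\<bar>prob X - prob X'\<bar> \<le> prob (space M - E)"
proof -
  have "prob X \<le> prob (X' \<union> (space M - E))"
    by (rule finite_measure_mono_AE) (use assms sets.sets_into_space in auto)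
  also have "\<dots> \<le> prob X' + prob (space M - E)"
    by (rule measure_Un_le) (use assms in auto)
  finally have 1: "prob X \<le> prob X' + prob (space M - E)" .
  have "prob X' \<le> prob (X \<union> (space M - E))"
    by (rule finite_measure_mono_AE) (use assms sets.sets_into_space in auto)
  also have "\<dots> \<le> prob X + prob (space M - E)"
    by (rule measure_Un_le) (use assms in auto)
  finally have 2: "prob X' \<le> prob X + prob (space M - E)" .
  show ?thesis using 1 2 by linarith
qed

lemma (in prob_space) approx_indep:
  assumes ev: "A \<in> events" "A' \<in> events" "B \<in> events" "B' \<in> events" "E \<in> events" "G \<in> events"
    and ae: "AE \<omega> in M. \<omega> \<in> E \<longrightarrow> (\<omega> \<in> A \<longleftrightarrow> \<omega> \<in> A')"
      "AE \<omega> in M. \<omega> \<in> G \<longrightarrow> (\<omega> \<in> B \<longleftrightarrow> \<omega> \<in> B')"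
    and ind: "prob (A' \<inter> B') = prob A' * prob B'"
  shows "\<bar>prob (A \<inter> B) - prob A * prob B\<bar> \<le> 2 * (prob (space M - E) + prob (space M - G))"
proof -
  let ?e = "prob (space M - E)" and ?f = "prob (space M - G)"
  have "AE \<omega> in M. \<omega> \<in> E \<inter> G \<longrightarrow> (\<omega> \<in> A \<inter> B \<longleftrightarrow> \<omega> \<in> A' \<inter> B')"
    using ae by eventually_elim auto
  from prob_approx[OF _ _ _ this] ev
  have 1: "\<bar>prob (A \<inter> B) - prob (A' \<inter> B')\<bar> \<le> prob (space M - E \<inter> G)" by auto
  have "prob (space M - E \<inter> G) \<le> ?e + ?f"
    using measure_Un_le[where A="space M - E" and B="space M - G" and M=M] ev by (simp add: Diff_Int)
  with 1 have 1: "\<bar>prob (A \<inter> B) - prob (A' \<inter> B')\<bar> \<le> ?e + ?f" by linarith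
  have a: "\<bar>prob A - prob A'\<bar> \<le> ?e" using prob_approx[OF _ _ _ ae(1)] ev by auto
  have b: "\<bar>prob B - prob B'\<bar> \<le> ?f" using prob_approx[OF _ _ _ ae(2)] ev by auto
  have "\<bar>prob A * prob B - prob A' * prob B'\<bar>
        = \<bar>prob A * (prob B - prob B') + (prob A - prob A') * prob B'\<bar>" by (simp add: algebra_simps)
  also have "\<dots> \<le> prob A * \<bar>prob B - prob B'\<bar> + \<bar>prob A - prob A'\<bar> * prob B'"
    by (rule order_trans[OF abs_triangle_ineq]) (simp add: abs_mult)
  also have "\<dots> \<le> 1 * ?f + ?e * 1"
    by (intro add_mono mult_mono) (use a b in auto)
  finally have 2: "\<bar>prob A * prob B - prob A' * prob B'\<bar> \<le> ?e + ?f" by simp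
  show ?thesis using 1 2 ind by (smt (verit))
qed




lemma sum_bound:
  assumes "\<And>i. i \<in> {1..q} \<Longrightarrow> \<bar>x (n - int i)\<bar> \<le> (1::real)"
  shows "(\<Sum>i=1..q. \<phi> i * x (n - int i)) \<le> (\<Sum>i=1..q. \<bar>\<phi> i\<bar>)"
proof (rule sum_mono)
  fix i assume i: "i \<in> {1..q}"
  have "\<phi> i * x (n - int i) \<le> \<bar>\<phi> i\<bar> * \<bar>x (n - int i)\<bar>" by (metis abs_ge_self abs_mult)
  also have "\<dots> \<le> \<bar>\<phi> i\<bar> * 1" by (intro mult_left_mono assms i) simp
  finally show "\<phi> i * x (n - int i) \<le> \<bar>\<phi> i\<bar>" by simp
qed

lemma aa_le:
  assumes "x n \<le> r - \<bar>\<mu>1\<bar> - \<bar>\<mu>2\<bar> - (\<Sum>i=1..q. \<bar>\<phi> i\<bar> + \<bar>\<psi> i\<bar>)"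
    and "\<And>i. i \<in> {1..q} \<Longrightarrow> \<bar>x (n - int i)\<bar> \<le> (1::real)"
  shows "aa \<mu>1 q \<phi> x n \<le> r" "aa \<mu>2 q \<psi> x n \<le> r"
proof -
  have s: "(\<Sum>i=1..q. \<bar>\<phi> i\<bar> + \<bar>\<psi> i\<bar>) = (\<Sum>i=1..q. \<bar>\<phi> i\<bar>) + (\<Sum>i=1..q. \<bar>\<psi> i\<bar>)"
    by (rule sum.distrib)
  have p: "0 \<le> (\<Sum>i=1..q. \<bar>\<phi> i\<bar>)" "0 \<le> (\<Sum>i=1..q. \<bar>\<psi> i\<bar>)" by (auto intro: sum_nonneg)
  have 1: "(\<Sum>i=1..q. \<phi> i * x (n - int i)) \<le> (\<Sum>i=1..q. \<bar>\<phi> i\<bar>)"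
    and 2: "(\<Sum>i=1..q. \<psi> i * x (n - int i)) \<le> (\<Sum>i=1..q. \<bar>\<psi> i\<bar>)"
    by (rule sum_bound, rule assms(2), assumption)+
  show "aa \<mu>1 q \<phi> x n \<le> r" "aa \<mu>2 q \<psi> x n \<le> r"
    unfolding aa_def using assms(1) s p 1 2 abs_ge_self[of \<mu>1] abs_ge_self[of \<mu>2] by linarith+
qed

locale tma = prob_space M for M :: "'a measure" +
  fixes e y :: "int \<Rightarrow> 'a \<Rightarrow> real" and f :: "real \<Rightarrow> real"
    and q d :: nat and r \<mu>1 \<mu>2 :: real and \<phi> \<psi> :: "nat \<Rightarrow> real"
  assumes indep: "indep_vars (\<lambda>_. borel) e UNIV"
    and dens: "\<And>n. distributed M lborel (e n) (\<lambda>x. ennreal (f x))"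
    and f_pos: "\<And>x. f x > 0"
    and d1: "d \<ge> 1"
    and ymeas: "\<And>n. y n \<in> borel_measurable M"
    and sol: "\<And>n. AE \<omega> in M. y n \<omega> =
        (if y (n - int d) \<omega> \<le> r
         then \<mu>1 + e n \<omega> + (\<Sum>i=1..q. \<phi> i * e (n - int i) \<omega>)
         else \<mu>2 + e n \<omega> + (\<Sum>i=1..q. \<psi> i * e (n - int i) \<omega>))"
begin

definition "cc = r - \<bar>\<mu>1\<bar> - \<bar>\<mu>2\<bar> - (\<Sum>i=1..q. \<bar>\<phi> i\<bar> + \<bar>\<psi> i\<bar>)"

definition "Cev n = {\<omega> \<in> space M. e n \<omega> \<le> cc \<and> (\<forall>i\<in>{1..q}. \<bar>e (n - int i) \<omega>\<bar> \<le> 1)}"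

lemma emeas[measurable]: "e n \<in> borel_measurable M"
  using dens[of n] by (auto dest: distributed_measurable)

lemma Cev_sets[measurable]: "Cev n \<in> events"
  unfolding Cev_def by measurable

abbreviation "ZZ \<equiv> Zf q d r \<mu>1 \<mu>2 \<phi> \<psi>"
abbreviation "YY \<equiv> Yv q d r \<mu>1 \<mu>2 \<phi> \<psi>"

lemma AE_Z:
  "AE \<omega> in M. \<forall>n m. (\<exists>j<m. \<omega> \<in> Cev (n - int (j*d))) \<longrightarrow>
       ((y n \<omega> \<le> r) = ZZ (\<lambda>j. e j \<omega>) n m)"
proof -
  have "AE \<omega> in M. \<forall>n. y n \<omega> =
        (if y (n - int d) \<omega> \<le> r then aa \<mu>1 q \<phi> (\<lambda>j. e j \<omega>) n else aa \<mu>2 q \<psi> (\<lambda>j. e j \<omega>) n)"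
    unfolding aa_def by (subst AE_all_countable) (use sol in auto)
  then show ?thesis
  proof eventually_elim
    case (elim \<omega>)
    show ?case
    proof (intro allI)
      fix m show "\<And>n. (\<exists>j<m. \<omega> \<in> Cev (n - int (j*d))) \<longrightarrow> ((y n \<omega> \<le> r) = ZZ (\<lambda>j. e j \<omega>) n m)"
      proof (induction m)
        case 0 then show ?case by simp
      next
        case (Suc m)
        show ?case
        proof
          assume "\<exists>j<Suc m. \<omega> \<in> Cev (n - int (j*d))"
          then obtain j where j: "j < Suc m" "\<omega> \<in> Cev (n - int (j*d))" by blast
          show "(y n \<omega> \<le> r) = ZZ (\<lambda>j. e j \<omega>) n (Suc m)"
          proof (cases j)
            case 0
            with j have "\<omega> \<in> Cev n" by simp
            then have le: "aa \<mu>1 q \<phi> (\<lambda>j. e j \<omega>) n \<le> r" "aa \<mu>2 q \<psi> (\<lambda>j. e j \<omega>) n \<le> r"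
              unfolding Cev_def cc_def by (intro aa_le; auto)+
            then show ?thesis using elim[rule_format, of n] by auto
          next
            case (Suc j')
            with j have "j' < m" "\<omega> \<in> Cev (n - int d - int (j'*d))" by (auto simp: algebra_simps)
            then have "(y (n - int d) \<omega> \<le> r) = ZZ (\<lambda>j. e j \<omega>) (n - int d) m"
              using Suc.IH[of "n - int d"] by blast
            then show ?thesis using elim[rule_format, of n] by auto
          qed
        qed
      qed
    qed
  qed
qed

lemma AE_Y:
  "AE \<omega> in M. \<forall>n m. (\<exists>j<m. \<omega> \<in> Cev (n - int d - int (j*d))) \<longrightarrow>
       y n \<omega> = YY (\<lambda>j. e j \<omega>) n m"
proof -
  have "AE \<omega> in M. \<forall>n. y n \<omega> =
        (if y (n - int d) \<omega> \<le> r then aa \<mu>1 q \<phi> (\<lambda>j. e j \<omega>) n else aa \<mu>2 q \<psi> (\<lambda>j. e j \<omega>) n)"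
    unfolding aa_def by (subst AE_all_countable) (use sol in auto)
  with AE_Z show ?thesis
  proof eventually_elim
    case (elim \<omega>)
    show ?case
    proof (intro allI impI)
      fix n m assume "\<exists>j<m. \<omega> \<in> Cev (n - int d - int (j*d))"
      then have "(y (n - int d) \<omega> \<le> r) = ZZ (\<lambda>j. e j \<omega>) (n - int d) m"
        using elim(1) by blast
      then show "y n \<omega> = YY (\<lambda>j. e j \<omega>) n m"
        using elim(2)[rule_format, of n] unfolding Yv_def by auto
    qed
  qed
qed

end



context tma begin

abbreviation "DM \<equiv> density lborel (\<lambda>x. ennreal (f x))"

lemma fmeas[measurable]: "(\<lambda>x. ennreal (f x)) \<in> borel_measurable borel"
  using distributed_borel_measurable[OF dens[of 0]] by simp

lemma distr_e: "distr M lborel (e n) = DM"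
  by (rule distributed_distr_eq_density[OF dens])

lemma prob_e: "S \<in> sets borel \<Longrightarrow> prob (e n -` S \<inter> space M) = measure DM S"
  by (subst distr_e[symmetric, of n], subst measure_distr) auto

lemma DM_prob: "prob_space DM"
  using prob_space_distr[of "e 0" lborel] distr_e[of 0] by simp

lemma DM_pos:
  assumes ab: "a < b" shows "measure DM {a..b} > 0"
proof -
  interpret P: prob_space DM by (rule DM_prob)
  have "emeasure DM {a..b} \<noteq> 0"
  proof
    assume "emeasure DM {a..b} = 0"
    then have "(\<integral>\<^sup>+x. ennreal (f x) * indicator {a..b} x \<partial>lborel) = 0"
      by (subst (asm) emeasure_density) auto
    then have "AE x in lborel. ennreal (f x) * indicator {a..b} x = 0"
      by (subst (asm) nn_integral_0_iff_AE) auto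
    then have "AE x in lborel. \<not> (x \<in> {a..b})"
    proof eventually_elim
      case (elim x)
      show ?case
      proof
        assume "x \<in> {a..b}"
        with elim have "ennreal (f x) = 0" by simp
        with f_pos[of x] show False by (simp add: ennreal_eq_0_iff)
      qed
    qed
    from emeasure_eq_0_AE[OF this] have "emeasure lborel {x\<in>space lborel. x \<in> {a..b}} = 0" by simp
    moreover have "{x\<in>space lborel. x \<in> {a..b}} = {a..b}" by auto
    ultimately have "emeasure lborel {a..b} = 0" by simp
    with ab show False by simp
  qed
  then show ?thesis
    using P.emeasure_eq_measure[of "{a..b}"] by (simp add: zero_less_measure_iff)
qed

definition "Fc = measure DM {..cc}"
definition "G1 = measure DM {-1..1}"
definition "pp = Fc * G1 ^ q"

lemma pp_pos: "pp > 0"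
proof -
  interpret P: prob_space DM by (rule DM_prob)
  have "measure DM {cc - 1..cc} \<le> Fc" unfolding Fc_def
    by (rule P.finite_measure_mono) auto
  with DM_pos[of "cc - 1" cc] have "Fc > 0" by simp
  moreover have "G1 > 0" unfolding G1_def by (rule DM_pos) simp
  ultimately show ?thesis unfolding pp_def by simp
qed

lemma prob_Cev: "prob (Cev n) = pp"
proof -
  define J where "J = {n - int q .. n}"
  define A where "A j = (if j = n then {..cc} else {-1..1::real})" for j
  have J: "J \<noteq> {}" "finite J" "n \<in> J" unfolding J_def by auto
  have "Cev n = (\<Inter>j\<in>J. e j -` A j \<inter> space M)"
  proof (intro equalityI subsetI)
    fix \<omega> assume w: "\<omega> \<in> Cev n"
    show "\<omega> \<in> (\<Inter>j\<in>J. e j -` A j \<inter> space M)"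
    proof
      fix j assume "j \<in> J"
      show "\<omega> \<in> e j -` A j \<inter> space M"
      proof (cases "j = n")
        case True then show ?thesis using w by (auto simp: Cev_def A_def)
      next
        case False
        with \<open>j \<in> J\<close> have i: "nat (n - j) \<in> {1..q}" "n - int (nat (n - j)) = j" by (auto simp: J_def)
        from w i(1) have "\<bar>e (n - int (nat (n - j))) \<omega>\<bar> \<le> 1" unfolding Cev_def by blast
        then have "\<bar>e j \<omega>\<bar> \<le> 1" by (simp only: i(2))
        then show ?thesis using w False by (auto simp: Cev_def A_def abs_le_iff)
      qed
    qed
  next
    fix \<omega> assume w: "\<omega> \<in> (\<Inter>j\<in>J. e j -` A j \<inter> space M)"
    have "\<omega> \<in> space M" using w J by auto
    moreover have "e n \<omega> \<le> cc" using w J by (auto simp: A_def)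
    moreover have "\<bar>e (n - int i) \<omega>\<bar> \<le> 1" if "i \<in> {1..q}" for i
    proof -
      have "n - int i \<in> J" "n - int i \<noteq> n" using that by (auto simp: J_def)
      then have "\<omega> \<in> e (n - int i) -` A (n - int i) \<inter> space M" using w by blast
      then show ?thesis using \<open>n - int i \<noteq> n\<close> by (auto simp: A_def abs_le_iff)
    qed
    ultimately show "\<omega> \<in> Cev n" by (auto simp: Cev_def)
  qed
  then have "prob (Cev n) = prob (\<Inter>j\<in>J. e j -` A j \<inter> space M)" by simp
  also have "\<dots> = (\<Prod>j\<in>J. prob (e j -` A j \<inter> space M))"
    by (rule indep_varsD[OF indep]) (use J in \<open>auto simp: A_def\<close>)
  also have "\<dots> = (\<Prod>j\<in>J. if j = n then Fc else G1)"
    by (intro prod.cong refl) (auto simp: prob_e A_def Fc_def G1_def)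
  also have "\<dots> = Fc * (\<Prod>j\<in>J - {n}. if j = n then Fc else G1)"
    using J by (simp add: prod.remove)
  also have "(\<Prod>j\<in>J - {n}. if j = n then Fc else G1) = (\<Prod>j\<in>J - {n}. G1)"
    by (intro prod.cong) auto
  also have "\<dots> = G1 ^ q"
  proof -
    have "nat (int q + 1) = Suc q" by simp
    then show ?thesis using J by (simp add: J_def)
  qed
  finally show ?thesis unfolding pp_def .
qed

end



lemma sep_nat:
  fixes t t' q d :: nat
  assumes "t < t'" "d \<ge> 1"
  shows "t*(q+1)*d + (q+1) \<le> t'*(q+1)*d"
proof -
  have "(q+1) * 1 \<le> (q+1)*d" using assms by (intro mult_le_mono2)
  hence "t*(q+1)*d + (q+1) \<le> t*(q+1)*d + (q+1)*d" by simp
  also have "\<dots> = (t+1)*(q+1)*d" by (simp add: algebra_simps)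
  also have "\<dots> \<le> t'*(q+1)*d" using assms by (intro mult_le_mono) auto
  finally show ?thesis .
qed

context tma begin

definition "Good n m = (\<Union>j<m. Cev (n - int (j*d)))"

lemma Good_sets[measurable]: "Good n m \<in> events"
  unfolding Good_def by (intro sets.finite_UN) auto

lemma Good_space: "Good n m \<subseteq> space M"
  unfolding Good_def Cev_def by auto

lemma bad_bound: "prob (space M - Good n m) \<le> (1 - pp) ^ (m div (q+1))"
proof (cases "m div (q+1) = 0")
  case True
  then show ?thesis by simp
next
  case False
  define T where "T = m div (q+1)"
  define nt where "nt t = n - int (t*(q+1)*d)" for t
  define K where "K t = {nt t - int q .. nt t}" for t
  define A where "A t = {x \<in> space (PiM (K t) (\<lambda>_. borel::real measure)).
      \<not> (x (nt t) \<le> cc \<and> (\<forall>i\<in>{1..q}. \<bar>x (nt t - int i)\<bar> \<le> 1))}" for t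
  have T0: "{..<T} \<noteq> {}" using False by (auto simp: T_def)
  have sub: "space M - Good n m \<subseteq> (\<Inter>t\<in>{..<T}. space M - Cev (nt t))"
  proof
    fix \<omega> assume w: "\<omega> \<in> space M - Good n m"
    show "\<omega> \<in> (\<Inter>t\<in>{..<T}. space M - Cev (nt t))"
    proof
      fix t assume "t \<in> {..<T}"
      then have "(t+1)*(q+1) \<le> m div (q+1) * (q+1)" unfolding T_def by (intro mult_le_mono1) simp
      also have "\<dots> \<le> m" by (rule div_times_less_eq_dividend)
      finally have "t*(q+1) < m" by simp
      then have "\<omega> \<notin> Cev (n - int ((t*(q+1))*d))" using w unfolding Good_def by blast
      then show "\<omega> \<in> space M - Cev (nt t)" using w unfolding nt_def by simp
    qed
  qed
  have ind: "indep_vars (\<lambda>t. PiM (K t) (\<lambda>_. borel)) (\<lambda>t \<omega>. restrict (\<lambda>i. e i \<omega>) (K t)) {..<T}"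
  proof (rule indep_vars_restrict[OF indep])
    show "disjoint_family_on K {..<T}"
    unfolding disjoint_family_on_def
    proof (intro ballI impI)
      fix t t' assume "t \<in> {..<T}" "t' \<in> {..<T}" "t \<noteq> t'"
      have key: "K a \<inter> K b = {}" if "a < b" for a b
      proof -
        have "a*(q+1)*d + (q+1) \<le> b*(q+1)*d" by (rule sep_nat[OF that d1])
        then have "int (a*(q+1)*d) + int q + 1 \<le> int (b*(q+1)*d)" by linarith
        then show ?thesis unfolding K_def nt_def by auto
      qed
      show "K t \<inter> K t' = {}"
        using key[of t t'] key[of t' t] \<open>t \<noteq> t'\<close> by (cases "t < t'") auto
    qed
  qed auto
  have Asets: "A t \<in> sets (PiM (K t) (\<lambda>_. borel))" for t
  proof -
    have mem: "nt t \<in> K t" "\<And>i. i \<in> {1..q} \<Longrightarrow> nt t - int i \<in> K t" unfolding K_def by auto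
    have "Measurable.pred (PiM (K t) (\<lambda>_. borel))
          (\<lambda>x. \<not> (x (nt t) \<le> cc \<and> (\<forall>i\<in>{1..q}. \<bar>x (nt t - int i)\<bar> \<le> 1)))"
      using mem by measurable
    then show ?thesis unfolding A_def by (simp add: pred_def)
  qed
  have pre: "(\<lambda>\<omega>. restrict (\<lambda>i. e i \<omega>) (K t)) -` A t \<inter> space M = space M - Cev (nt t)" for t
  proof -
    have mem: "nt t \<in> K t" "\<And>i. i \<in> {1..q} \<Longrightarrow> nt t - int i \<in> K t" unfolding K_def by auto
    show ?thesis using mem unfolding A_def Cev_def by (auto simp: space_PiM)
  qed
  have "prob (space M - Good n m) \<le> prob (\<Inter>t\<in>{..<T}. space M - Cev (nt t))"
    by (rule finite_measure_mono[OF sub]) (use T0 in auto)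
  also have "\<dots> = prob (\<Inter>t\<in>{..<T}. (\<lambda>\<omega>. restrict (\<lambda>i. e i \<omega>) (K t)) -` A t \<inter> space M)"
    using pre by simp
  also have "\<dots> = (\<Prod>t\<in>{..<T}. prob ((\<lambda>\<omega>. restrict (\<lambda>i. e i \<omega>) (K t)) -` A t \<inter> space M))"
    by (rule indep_varsD[OF ind]) (use T0 Asets in auto)
  also have "\<dots> = (\<Prod>t\<in>{..<T}. 1 - pp)"
    by (intro prod.cong refl) (simp add: pre prob_compl prob_Cev)
  also have "\<dots> = (1 - pp) ^ T" by simp
  finally show ?thesis unfolding T_def .
qed

end



context tma begin

lemma ymeas'[measurable]: "y n \<in> borel_measurable M" by (rule ymeas)

lemma main_bound:
  assumes km: "(m+1)*d + q < k"
  shows "\<bar>prob {\<omega>\<in>space M. y 0 \<omega> \<le> u \<and> y (int k) \<omega> \<le> v}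
          - prob {\<omega>\<in>space M. y 0 \<omega> \<le> u} * prob {\<omega>\<in>space M. y (int k) \<omega> \<le> v}\<bar>
         \<le> 4 * (1 - pp) ^ (m div (q+1))"
proof -
  define J0 where "J0 = {..0::int}"
  define J1 where "J1 = {1::int..}"
  define X0 where "X0 \<omega> = restrict (\<lambda>i. e i \<omega>) J0" for \<omega>
  define X1 where "X1 \<omega> = restrict (\<lambda>i. e i \<omega>) J1" for \<omega>
  define Sa where "Sa = {x \<in> space (PiM J0 (\<lambda>_. borel::real measure)). YY x 0 m \<le> u}"
  define Sb where "Sb = {x \<in> space (PiM J1 (\<lambda>_. borel::real measure)). YY x (int k) m \<le> v}"
  define A where "A = {\<omega>\<in>space M. y 0 \<omega> \<le> u}"
  define B where "B = {\<omega>\<in>space M. y (int k) \<omega> \<le> v}"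
  define A' where "A' = X0 -` Sa \<inter> space M"
  define B' where "B' = X1 -` Sb \<inter> space M"
  define E where "E = Good (0 - int d) m"
  define G where "G = Good (int k - int d) m"
  have "int ((m+1)*d + q) < int k" using km by (simp only: of_nat_less_iff)
  then have kk: "int k - int d - int (m*d) - int q \<ge> 1"
    by (simp add: algebra_simps)
  have r0: "\<And>j. 0 - int d - int (m*d) - int q \<le> j \<Longrightarrow> j \<le> 0 \<Longrightarrow> j \<in> J0"
    unfolding J0_def by auto
  have r1: "\<And>j. int k - int d - int (m*d) - int q \<le> j \<Longrightarrow> j \<le> int k \<Longrightarrow> j \<in> J1"
    unfolding J1_def using kk by auto
  have X0m: "X0 \<in> measurable M (PiM J0 (\<lambda>_. borel))" unfolding X0_def by measurable
  have X1m: "X1 \<in> measurable M (PiM J1 (\<lambda>_. borel))" unfolding X1_def by measurable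
  have Sa: "Sa \<in> sets (PiM J0 (\<lambda>_. borel))"
  proof -
    have "(\<lambda>x. YY x 0 m) \<in> borel_measurable (PiM J0 (\<lambda>_. borel))" by (rule Yv_meas) (rule r0)
    then show ?thesis unfolding Sa_def by measurable
  qed
  have Sb: "Sb \<in> sets (PiM J1 (\<lambda>_. borel))"
  proof -
    have "(\<lambda>x. YY x (int k) m) \<in> borel_measurable (PiM J1 (\<lambda>_. borel))" by (rule Yv_meas) (rule r1)
    then show ?thesis unfolding Sb_def by measurable
  qed
  have Y0: "YY (X0 \<omega>) 0 m = YY (\<lambda>j. e j \<omega>) 0 m" for \<omega>
    by (rule Yv_dep) (use r0 in \<open>auto simp: X0_def\<close>)
  have Y1: "YY (X1 \<omega>) (int k) m = YY (\<lambda>j. e j \<omega>) (int k) m" for \<omega>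
    by (rule Yv_dep) (use r1 in \<open>auto simp: X1_def\<close>)
  have A'eq: "A' = {\<omega>\<in>space M. YY (\<lambda>j. e j \<omega>) 0 m \<le> u}"
    unfolding A'_def Sa_def using X0m[THEN measurable_space] Y0 by auto
  have B'eq: "B' = {\<omega>\<in>space M. YY (\<lambda>j. e j \<omega>) (int k) m \<le> v}"
    unfolding B'_def Sb_def using X1m[THEN measurable_space] Y1 by auto
  have ind: "indep_var (PiM J0 (\<lambda>_. borel)) X0 (PiM J1 (\<lambda>_. borel)) X1"
    unfolding X0_def X1_def by (rule indep_var_restrict[OF indep]) (auto simp: J0_def J1_def)
  have "prob ((\<lambda>x. (X0 x, X1 x)) -` (Sa \<times> Sb) \<inter> space M) = prob A' * prob B'"
    unfolding A'_def B'_def by (rule indep_varD[OF ind Sa Sb])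
  moreover have "(\<lambda>x. (X0 x, X1 x)) -` (Sa \<times> Sb) \<inter> space M = A' \<inter> B'"
    unfolding A'_def B'_def by auto
  ultimately have indAB: "prob (A' \<inter> B') = prob A' * prob B'" by simp
  have aeA: "AE \<omega> in M. \<omega> \<in> E \<longrightarrow> (\<omega> \<in> A \<longleftrightarrow> \<omega> \<in> A')"
    using AE_Y
  proof eventually_elim
    case (elim \<omega>)
    show ?case
    proof
      assume "\<omega> \<in> E"
      then have "\<exists>j<m. \<omega> \<in> Cev (0 - int d - int (j*d))" unfolding E_def Good_def by auto
      then have "y 0 \<omega> = YY (\<lambda>j. e j \<omega>) 0 m" using elim by blast
      then show "\<omega> \<in> A \<longleftrightarrow> \<omega> \<in> A'" unfolding A_def A'eq by auto
    qed
  qed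
  have aeB: "AE \<omega> in M. \<omega> \<in> G \<longrightarrow> (\<omega> \<in> B \<longleftrightarrow> \<omega> \<in> B')"
    using AE_Y
  proof eventually_elim
    case (elim \<omega>)
    show ?case
    proof
      assume "\<omega> \<in> G"
      then have "\<exists>j<m. \<omega> \<in> Cev (int k - int d - int (j*d))" unfolding G_def Good_def by auto
      then have "y (int k) \<omega> = YY (\<lambda>j. e j \<omega>) (int k) m" using elim by blast
      then show "\<omega> \<in> B \<longleftrightarrow> \<omega> \<in> B'" unfolding B_def B'eq by auto
    qed
  qed
  have ev: "A \<in> events" "A' \<in> events" "B \<in> events" "B' \<in> events" "E \<in> events" "G \<in> events"
    unfolding A_def B_def E_def G_def A'_def B'_def using X0m X1m Sa Sb by auto
  have "\<bar>prob (A \<inter> B) - prob A * prob B\<bar> \<le> 2 * (prob (space M - E) + prob (space M - G))"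
    by (rule approx_indep[OF ev aeA aeB indAB])
  also have "\<dots> \<le> 2 * ((1 - pp) ^ (m div (q+1)) + (1 - pp) ^ (m div (q+1)))"
    unfolding E_def G_def by (intro mult_left_mono add_mono bad_bound) auto
  also have "A \<inter> B = {\<omega>\<in>space M. y 0 \<omega> \<le> u \<and> y (int k) \<omega> \<le> v}" unfolding A_def B_def by auto
  finally show ?thesis unfolding A_def B_def by simp
qed

end



lemma k_bound:
  fixes k q d m T s :: nat
  assumes "d \<ge> 1" "k \<ge> q + 1 + d" "s = (k - 1 - q) div d" "m = s - 1" "T = m div (q+1)"
  shows "(m+1)*d + q < k" "k \<le> d*(q+1)*T + ((q+2)*d + q)"
proof -
  define x where "x = k - 1 - q"
  have x: "x = s*d + x mod d" "x mod d < d" using assms unfolding x_def by simp_all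
  have "x \<ge> d" using assms unfolding x_def by simp
  then have "d div d \<le> x div d" by (rule div_le_mono)
  then have s1: "s \<ge> 1" using assms(1,3) unfolding x_def[symmetric] by simp
  then have ms: "m + 1 = s" using assms by simp
  have "s*d \<le> x" using x by linarith
  moreover have "(m+1)*d = s*d" using ms by simp
  ultimately show "(m+1)*d + q < k" using assms(2) unfolding x_def by linarith
  define mm where "mm = m mod (q+1)"
  have mdec: "m = T*(q+1) + mm" "mm \<le> q" unfolding mm_def assms(5)
    using div_mult_mod_eq[of m "q+1"] by (simp_all add: less_Suc_eq_le)
  have "s*d = (T*(q+1) + mm + 1)*d" using ms mdec by simp
  also have "\<dots> = T*(q+1)*d + mm*d + d" by (simp add: algebra_simps)
  also have "mm*d \<le> q*d" using mdec by (intro mult_le_mono1)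
  finally have "s*d \<le> T*(q+1)*d + q*d + d" by simp
  moreover have "k = x + 1 + q" using assms unfolding x_def by simp
  ultimately have "k \<le> T*(q+1)*d + q*d + d + d + q" using x by linarith
  then show "k \<le> d*(q+1)*T + ((q+2)*d + q)" by (simp add: algebra_simps)
qed

theorem theorem3p2:
  fixes M :: "'a measure"
    and e y :: "int \<Rightarrow> 'a \<Rightarrow> real"
    and f :: "real \<Rightarrow> real"
    and q d :: nat
    and r \<mu>1 \<mu>2 :: real
    and \<phi> \<psi> :: "nat \<Rightarrow> real"
  assumes "prob_space M"
    and indep: "prob_space.indep_vars M (\<lambda>_. borel) e UNIV"
    and dens: "\<And>n. distributed M lborel (e n) (\<lambda>x. ennreal (f x))"
    and f_cont: "continuous_on UNIV f"
    and f_bdd: "bounded (range f)"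
    and f_pos: "\<And>x. f x > 0"
    and "q \<ge> 1" and "d \<ge> 1"
    and stat: "strictly_stationary M y"
    and sol: "\<And>n. AE \<omega> in M. y n \<omega> =
        (if y (n - int d) \<omega> \<le> r
         then \<mu>1 + e n \<omega> + (\<Sum>i=1..q. \<phi> i * e (n - int i) \<omega>)
         else \<mu>2 + e n \<omega> + (\<Sum>i=1..q. \<psi> i * e (n - int i) \<omega>))"
  shows "\<exists>\<rho>::real. 0 < \<rho> \<and> \<rho> < 1 \<and>
    (\<forall>u v::real.
      (\<lambda>k::nat. \<bar>measure M {\<omega> \<in> space M. y 0 \<omega> \<le> u \<and> y (int k) \<omega> \<le> v}
                 - measure M {\<omega> \<in> space M. y 0 \<omega> \<le> u}
                   * measure M {\<omega> \<in> space M. y (int k) \<omega> \<le> v}\<bar>)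
      \<in> O(\<lambda>k. \<rho> ^ k))"
proof -
  have ym: "\<And>n. y n \<in> borel_measurable M" using stat by (simp add: strictly_stationary_def)
  interpret tma M e y f q d r \<mu>1 \<mu>2 \<phi> \<psi>
    unfolding tma_def tma_axioms_def
    using assms(1) indep dens f_pos \<open>d \<ge> 1\<close> ym sol by blast
  have pp1: "pp \<le> 1" using prob_Cev[of 0] by (metis prob_le_1)
  define \<beta> where "\<beta> = max (1 - pp) (1/2)"
  define L where "L = d*(q+1)"
  define \<rho> where "\<rho> = root L \<beta>"
  define c0 where "c0 = (q+2)*d + q"
  have L: "L > 0" using \<open>d \<ge> 1\<close> by (simp add: L_def)
  have \<beta>: "0 < \<beta>" "\<beta> < 1" using pp_pos by (auto simp: \<beta>_def)
  have \<rho>: "0 < \<rho>" "\<rho> < 1" unfolding \<rho>_def using L \<beta> by (auto intro: real_root_gt_zero)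
  have \<rho>L: "\<rho> ^ L = \<beta>" unfolding \<rho>_def using L \<beta> by simp
  have main: "\<forall>\<^sub>F k in at_top. norm (\<bar>measure M {\<omega> \<in> space M. y 0 \<omega> \<le> u \<and> y (int k) \<omega> \<le> v}
                 - measure M {\<omega> \<in> space M. y 0 \<omega> \<le> u}
                   * measure M {\<omega> \<in> space M. y (int k) \<omega> \<le> v}\<bar>) \<le> (4 / \<rho>^c0) * norm (\<rho> ^ k)" for u v
    unfolding eventually_at_top_linorder
  proof (intro exI allI impI)
    fix k :: nat assume k: "k \<ge> q + 1 + d"
    define s where "s = (k - 1 - q) div d"
    define m where "m = s - 1"
    define T where "T = m div (q+1)"
    note kb = k_bound[OF \<open>d \<ge> 1\<close> k s_def m_def T_def]
    have "\<bar>measure M {\<omega> \<in> space M. y 0 \<omega> \<le> u \<and> y (int k) \<omega> \<le> v}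
                 - measure M {\<omega> \<in> space M. y 0 \<omega> \<le> u}
                   * measure M {\<omega> \<in> space M. y (int k) \<omega> \<le> v}\<bar> \<le> 4 * (1 - pp) ^ T"
      unfolding T_def by (rule main_bound[OF kb(1)])
    also have "(1 - pp) ^ T \<le> \<beta> ^ T"
      using pp1 by (intro power_mono) (auto simp: \<beta>_def)
    also have "\<beta> ^ T = \<rho> ^ (L*T)" by (simp add: \<rho>L[symmetric] power_mult)
    also have "\<rho> ^ (L*T) = \<rho> ^ (L*T + c0) / \<rho> ^ c0" using \<rho> by (simp add: power_add)
    also have "\<rho> ^ (L*T + c0) \<le> \<rho> ^ k"
      using \<rho> kb(2) by (intro power_decreasing) (auto simp: L_def c0_def)
    finally show "norm (\<bar>measure M {\<omega> \<in> space M. y 0 \<omega> \<le> u \<and> y (int k) \<omega> \<le> v}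
                 - measure M {\<omega> \<in> space M. y 0 \<omega> \<le> u}
                   * measure M {\<omega> \<in> space M. y (int k) \<omega> \<le> v}\<bar>) \<le> (4 / \<rho>^c0) * norm (\<rho> ^ k)"
      using \<rho> by (simp add: divide_right_mono mult_left_mono)
  qed
  show ?thesis
  proof (intro exI[of _ \<rho>] conjI allI)
    fix u v
    show "(\<lambda>k::nat. \<bar>measure M {\<omega> \<in> space M. y 0 \<omega> \<le> u \<and> y (int k) \<omega> \<le> v}
                 - measure M {\<omega> \<in> space M. y 0 \<omega> \<le> u}
                   * measure M {\<omega> \<in> space M. y (int k) \<omega> \<le> v}\<bar>)
      \<in> O(\<lambda>k. \<rho> ^ k)"
      by (rule bigoI[OF main])
  qed (use \<rho> in auto)
qed


end
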